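(* Let $c\in(0,1]$ be a constant. For every $N,M$, every input $X=(x_1,\dots,x_N)\in[M]^N$ and every (sufficiently large) positive integer $T$, run the following sampling procedure $\mathcal{S}_T$: set $U:=24T^{1+c}\ln T$; choose indices $i_1,\dots,i_U\in[N]$ independently and uniformly at random (with replacement); query $x_{i_1},\dots,x_{i_U}$; for each $j\in[M]$ let $z_j$ be the number of occurrences of $j$ in $(x_{i_1},\dots,x_{i_U})$, and output $\widetilde\kappa_j:=\frac{N}{U}z_j$. Let $\kappa_j$ be the number of indices $i\in[N]$ with $x_i=j$. Then with probability $1-O(1/T)$ (the implied constant independent of $N,M,X$), we have \[ |\widetilde\kappa_j-\kappa_j|\le \frac{N}{T}+\frac{\kappa_j}{T^{c}}\quad\text{for all } j\in[M]. \] *)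

theory Defs
  imports "HOL-Probability.Probability"
begin

definition sample_size :: "real \<Rightarrow> nat \<Rightarrow> nat" where
  "sample_size c T = nat \<lceil>24 * real T powr (1 + c) * ln (real T)\<rceil>"

definition index_sample :: "nat \<Rightarrow> nat \<Rightarrow> (nat \<Rightarrow> nat) pmf" where
  "index_sample N U = Pi_pmf {..<U} 0 (\<lambda>_. pmf_of_set {1..N})"

definition sample_count :: "(nat \<Rightarrow> nat) \<Rightarrow> nat \<Rightarrow> (nat \<Rightarrow> nat) \<Rightarrow> nat \<Rightarrow> nat" where
  "sample_count X U idx j = card {u \<in> {..<U}. X (idx u) = j}"

definition estimate :: "(nat \<Rightarrow> nat) \<Rightarrow> nat \<Rightarrow> nat \<Rightarrow> (nat \<Rightarrow> nat) \<Rightarrow> nat \<Rightarrow> real" where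
  "estimate X N U idx j = real N / real U * real (sample_count X U idx j)"

definition true_count :: "(nat \<Rightarrow> nat) \<Rightarrow> nat \<Rightarrow> nat \<Rightarrow> nat" where
  "true_count X N j = card {i \<in> {1..N}. X i = j}"

end

theory Submission
  imports Defs
begin


lemma card_exp:
  assumes "finite A"
  shows "exp (s * real (card {u\<in>A. P u})) = (\<Prod>u\<in>A. if P u then exp s else 1)"
proof -
  have "(\<Prod>u\<in>A. if P u then exp s else 1) = (\<Prod>u\<in>A \<inter> {u. P u}. exp s) * (\<Prod>u\<in>A \<inter> - {u. P u}. 1)"
    by (rule prod.If_cases) (rule assms)
  also have "\<dots> = exp s ^ card {u\<in>A. P u}"
    by (simp add: Int_def)
  finally show ?thesis by (simp add: exp_of_nat2_mult)
qed

lemma true_count_le: "true_count X N j \<le> N"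
proof -
  have "card {i \<in> {1..N}. X i = j} \<le> card {1..N}" by (rule card_mono) auto
  thus ?thesis unfolding true_count_def by simp
qed

lemma mgf:
  assumes N: "N \<ge> 1"
  shows "measure_pmf.expectation (index_sample N U) (\<lambda>idx. exp (s * real (sample_count X U idx j)))
       = (1 + real (true_count X N j) / real N * (exp s - 1)) ^ U"
proof -
  have "measure_pmf.expectation (index_sample N U) (\<lambda>idx. exp (s * real (sample_count X U idx j)))
     = measure_pmf.expectation (index_sample N U) (\<lambda>idx. \<Prod>u\<in>{..<U}. (\<lambda>u i. if X i = j then exp s else 1) u (idx u))"
    unfolding sample_count_def by (subst card_exp) auto
  also have "\<dots> = (\<Prod>u\<in>{..<U}. measure_pmf.expectation (pmf_of_set {1..N}) (\<lambda>i. if X i = j then exp s else 1))"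
    unfolding index_sample_def
    by (rule expectation_prod_Pi_pmf) (use N in \<open>auto intro!: integrable_measure_pmf_finite\<close>)
  also have "measure_pmf.expectation (pmf_of_set {1..N}) (\<lambda>i. if X i = j then exp s else 1)
      = (\<Sum>i\<in>{1..N}. if X i = j then exp s else 1) / real N"
    using N by (subst integral_pmf_of_set) auto
  also have "(\<Sum>i\<in>{1..N}. if X i = j then exp s else 1) = (\<Sum>i\<in>{1..N} \<inter> {i. X i = j}. exp s) + (\<Sum>i\<in>{1..N} \<inter> - {i. X i = j}. 1)"
    by (rule sum.If_cases) simp
  also have "\<dots> = real (true_count X N j) * exp s + (real N - real (true_count X N j))"
  proof -
    have "card ({1..N} \<inter> - {i. X i = j}) = N - true_count X N j"
    proof -
      have "{1..N} \<inter> - {i. X i = j} = {1..N} - {i \<in> {1..N}. X i = j}" by auto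
      moreover have "card ({1..N} - {i \<in> {1..N}. X i = j}) = card {1..N} - card {i \<in> {1..N}. X i = j}"
        by (rule card_Diff_subset) auto
      ultimately show ?thesis unfolding true_count_def by simp
    qed
    moreover have "true_count X N j \<le> N" by (rule true_count_le)
    ultimately show ?thesis unfolding true_count_def by (simp add: Int_def of_nat_diff)
  qed
  finally show ?thesis using N by (simp add: field_simps)
qed

lemma pow_le_exp: "(x::real) \<ge> 0 \<Longrightarrow> (1 + x) ^ U \<le> exp (real U * x)"
proof -
  assume x: "x \<ge> 0"
  have "(1 + x) ^ U \<le> exp x ^ U" by (rule power_mono) (use x exp_ge_add_one_self[of x] in auto)
  thus ?thesis by (simp add: exp_of_nat_mult)
qed

lemma exp_minus_one_le: "exp (y::real) - 1 \<le> y * exp y"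
proof -
  have "1 - y \<le> exp (-y)" using exp_ge_add_one_self[of "-y"] by simp
  hence "(1 - y) * exp y \<le> exp (-y) * exp y" by (rule mult_right_mono) simp
  thus ?thesis by (simp add: exp_minus field_simps)
qed

lemma exp_neg_bound: "0 \<le> (s::real) \<Longrightarrow> exp (-s) \<le> 1 - s + s^2"
proof -
  assume s: "0 \<le> s"
  have "1 + s \<le> exp s" by (rule exp_ge_add_one_self)
  hence "exp (-s) \<le> 1 / (1 + s)" using s by (simp add: exp_minus field_simps)
  also have "\<dots> \<le> 1 - s + s^2" using s by (simp add: field_simps power2_eq_square)
  finally show ?thesis .
qed

lemma Z_bounded: "real (sample_count X U idx j) \<le> real U"
proof -
  have "card {u \<in> {..<U}. X (idx u) = j} \<le> card {..<U}" by (rule card_mono) auto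
  thus ?thesis unfolding sample_count_def by simp
qed

lemma integrable_Z:
  "integrable (measure_pmf (index_sample N U)) (\<lambda>idx. exp (s * real (sample_count X U idx j)))"
proof (rule measure_pmf.integrable_const_bound[where B = "exp (\<bar>s\<bar> * real U)"])
  show "AE idx in measure_pmf (index_sample N U). norm (exp (s * real (sample_count X U idx j))) \<le> exp (\<bar>s\<bar> * real U)"
  proof (rule AE_I2)
    fix idx
    have "s * real (sample_count X U idx j) \<le> \<bar>s\<bar> * real U"
    proof -
      have "s * real (sample_count X U idx j) \<le> \<bar>s\<bar> * real (sample_count X U idx j)"
        by (rule mult_right_mono) auto
      also have "\<dots> \<le> \<bar>s\<bar> * real U" by (rule mult_left_mono) (use Z_bounded[of X U idx j] in auto)
      finally show ?thesis .
    qed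
    thus "norm (exp (s * real (sample_count X U idx j))) \<le> exp (\<bar>s\<bar> * real U)" by simp
  qed
qed simp



lemma upper_tail:
  assumes N: "N \<ge> 1" and s: "0 < s" "s \<le> 1" and ea: "exp (s * a) \<ge> 2"
    and a: "a \<ge> real U * (real (true_count X N j) / real N) * (1 + s) + t"
  shows "measure_pmf.prob (index_sample N U) {idx. real (sample_count X U idx j) \<ge> a}
         \<le> 4 * s * real U * (real (true_count X N j) / real N) * exp (- s * t)"
proof -
  define q where "q = real (true_count X N j) / real N"
  define M where "M = measure_pmf (index_sample N U)"
  define Z where "Z = (\<lambda>idx. real (sample_count X U idx j))"
  define w where "w = exp s - 1"
  have q0: "q \<ge> 0" unfolding q_def by simp
  have w0: "w \<ge> 0" unfolding w_def using s by simp
  have w2: "w \<le> s + s^2" unfolding w_def using exp_bound[of s] s by simp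
  have mono_div: "\<And>x y. x \<le> y \<Longrightarrow> x / (exp (s * a) - 1) \<le> y / (exp (s * a) - 1)"
  proof -
    fix x y :: real assume "x \<le> y"
    moreover have "0 \<le> exp (s * a) - 1" using ea by linarith
    ultimately show "x / (exp (s * a) - 1) \<le> y / (exp (s * a) - 1)" by (rule divide_right_mono)
  qed
  have int: "integrable M (\<lambda>idx. exp (s * Z idx) - 1)"
    unfolding M_def Z_def by (intro Bochner_Integration.integrable_diff integrable_Z) simp
  have "measure M {idx. Z idx \<ge> a} \<le> measure M {idx \<in> space M. exp (s * Z idx) - 1 \<ge> exp (s * a) - 1}"
    using s unfolding M_def by (intro measure_pmf.finite_measure_mono) auto
  also have "\<dots> \<le> (\<integral>idx. exp (s * Z idx) - 1 \<partial>M) / (exp (s * a) - 1)"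
  proof (rule integral_Markov_inequality_measure[OF int, of UNIV])
    show "AE x in M. 0 \<le> exp (s * Z x) - 1" unfolding Z_def using s by simp
    have "s * a > 0"
    proof (rule ccontr)
      assume "\<not> s * a > 0" hence "exp (s * a) \<le> 1" by simp
      thus False using ea by linarith
    qed
    thus "0 < exp (s * a) - 1" by simp
  qed (simp add: M_def)
  also have "(\<integral>idx. exp (s * Z idx) - 1 \<partial>M) = (1 + q * w) ^ U - 1"
  proof -
    have "(\<integral>idx. exp (s * Z idx) - 1 \<partial>M) = (\<integral>idx. exp (s * Z idx) \<partial>M) - (\<integral>idx. 1 \<partial>M)"
      unfolding M_def Z_def by (intro Bochner_Integration.integral_diff integrable_Z) simp
    also have "(\<integral>idx. exp (s * Z idx) \<partial>M) = (1 + q * w) ^ U"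
      unfolding M_def Z_def q_def w_def by (rule mgf[OF N])
    finally show ?thesis by (simp add: M_def)
  qed
  also have "(1 + q * w) ^ U - 1 \<le> exp (real U * (q * w)) - 1"
    using pow_le_exp[of "q * w" U] q0 w0 by simp
  also have "\<dots> \<le> real U * (q * w) * exp (real U * (q * w))" by (rule exp_minus_one_le)
  also have "real U * (q * w) * exp (real U * (q * w)) / (exp (s * a) - 1)
      \<le> real U * (q * w) * exp (real U * (q * w)) / (exp (s * a) / 2)"
  proof (rule divide_left_mono)
    show "exp (s * a) / 2 \<le> exp (s * a) - 1" using ea by simp
    have "0 < exp (s * a) - 1" using ea by linarith
    thus "0 < (exp (s * a) - 1) * (exp (s * a) / 2)" by simp
  qed (use q0 w0 in auto)
  also have "\<dots> = 2 * real U * q * w * exp (real U * q * w - s * a)"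
    by (simp add: exp_diff field_simps)
  also have "\<dots> \<le> 2 * real U * q * (2 * s) * exp (- s * t)"
  proof (rule mult_mono)
    show "2 * real U * q * w \<le> 2 * real U * q * (2 * s)"
    proof (rule mult_left_mono)
      have "s * s \<le> s * 1" using s by (intro mult_left_mono) auto
      thus "w \<le> 2 * s" using w2 by (simp add: power2_eq_square)
    qed (use q0 in auto)
    have "real U * q * w \<le> real U * q * (s + s^2)"
      using w2 q0 by (intro mult_left_mono) auto
    moreover have "s * a \<ge> s * (real U * q * (1 + s) + t)"
      using a s unfolding q_def by (intro mult_left_mono) auto
    ultimately have "real U * q * w - s * a \<le> - s * t"
      by (simp add: algebra_simps power2_eq_square)
    thus "exp (real U * q * w - s * a) \<le> exp (- s * t)" by simp
  qed (use s q0 in auto)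
  finally show ?thesis using mono_div unfolding M_def Z_def q_def by (simp add: mult_ac)
qed

lemma lower_tail:
  assumes N: "N \<ge> 1" and s: "0 < s" "s \<le> 1"
  shows "measure_pmf.prob (index_sample N U) {idx. real (sample_count X U idx j) \<le> b}
         \<le> exp (s * b - real U * (real (true_count X N j) / real N) * (s - s^2))"
proof -
  define q where "q = real (true_count X N j) / real N"
  define M where "M = measure_pmf (index_sample N U)"
  define Z where "Z = (\<lambda>idx. real (sample_count X U idx j))"
  define w where "w = exp (-s) - 1"
  have q0: "q \<ge> 0" unfolding q_def by simp
  have q1: "q \<le> 1" unfolding q_def using true_count_le[of X N j] N by simp
  have w0: "w \<ge> -1" unfolding w_def by simp
  have w2: "w \<le> - s + s^2" unfolding w_def using exp_neg_bound[of s] s by simp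
  have mono_div: "\<And>x y. x \<le> y \<Longrightarrow> x / exp (- (s * b)) \<le> y / exp (- (s * b))"
    by (rule divide_right_mono) auto
  have int: "integrable M (\<lambda>idx. exp (-s * Z idx))"
    unfolding M_def Z_def by (rule integrable_Z)
  have "measure M {idx. Z idx \<le> b} \<le> measure M {idx \<in> space M. exp (-s * Z idx) \<ge> exp (-s * b)}"
    using s unfolding M_def by (intro measure_pmf.finite_measure_mono) auto
  also have "\<dots> \<le> (\<integral>idx. exp (-s * Z idx) \<partial>M) / exp (-s * b)"
    by (rule integral_Markov_inequality_measure[OF int, of UNIV]) (auto simp: M_def)
  also have "(\<integral>idx. exp (-s * Z idx) \<partial>M) = (1 + q * w) ^ U"
    unfolding M_def Z_def q_def w_def by (rule mgf[OF N])
  also have "(1 + q * w) ^ U \<le> exp (q * w) ^ U"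
  proof (rule power_mono)
    have "q * w \<ge> q * (-1)" using q0 w0 by (intro mult_left_mono) auto
    hence "q * w \<ge> -1" using q1 by linarith
    thus "0 \<le> 1 + q * w" by simp
  qed (rule exp_ge_add_one_self)
  also have "exp (q * w) ^ U = exp (real U * q * w)" by (simp add: exp_of_nat_mult[symmetric] mult_ac)
  also have "exp (real U * q * w) / exp (- s * b) = exp (s * b + real U * q * w)"
    by (simp add: exp_diff[symmetric] )
  also have "\<dots> \<le> exp (s * b - real U * q * (s - s^2))"
  proof -
    have "real U * q * w \<le> real U * q * (- s + s^2)"
      using w2 q0 by (intro mult_left_mono) auto
    thus ?thesis by (simp add: algebra_simps)
  qed
  finally show ?thesis using mono_div unfolding M_def Z_def q_def by simp
qed



lemma exp_nat_ln: "0 < (x::real) \<Longrightarrow> exp (real k * ln x) = x ^ k"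
  by (simp add: exp_of_nat_mult)

lemma sample_facts:
  assumes T: "T \<ge> 3" and c: "0 < c" "c \<le> 1"
  shows "real (sample_size c T) \<ge> 24 * real T * real T powr c * ln (real T)"
    and "real (sample_size c T) \<le> 25 * real T ^ 3"
    and "sample_size c T > 0"
proof -
  have T1: "real T \<ge> 1" using T by simp
  have lnpos: "ln (real T) > 0" using T by simp
  have Tp: "real T powr (1 + c) = real T * real T powr c"
    using T by (simp add: powr_add)
  show ge: "real (sample_size c T) \<ge> 24 * real T * real T powr c * ln (real T)"
    unfolding sample_size_def using real_nat_ceiling_ge[of "24 * real T powr (1 + c) * ln (real T)"]
    by (simp add: Tp mult_ac)
  have "real (sample_size c T) \<le> 24 * real T powr (1 + c) * ln (real T) + 1"
  proof -
    have "0 \<le> 24 * real T powr (1 + c) * ln (real T)" using lnpos by simp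
    thus ?thesis unfolding sample_size_def by linarith
  qed
  also have "24 * real T powr (1 + c) * ln (real T) \<le> 24 * real T ^ 2 * real T"
  proof -
    have "real T powr (1 + c) \<le> real T powr 2" using T1 c by (intro powr_mono) auto
    hence a: "real T powr (1 + c) \<le> real T ^ 2" using T1 by (simp add: powr_realpow)
    have b: "ln (real T) \<le> real T" using T1 ln_le_minus_one[of "real T"] by simp
    show ?thesis using a b lnpos by (intro mult_mono) auto
  qed
  hence "24 * real T powr (1 + c) * ln (real T) + 1 \<le> 25 * real T ^ 3"
  proof -
    assume h: "24 * real T powr (1 + c) * ln (real T) \<le> 24 * real T ^ 2 * real T"
    have "1 \<le> real T ^ 3" using T1 by (rule one_le_power)
    moreover have "real T ^ 2 * real T = real T ^ 3" by (simp add: power3_eq_cube power2_eq_square)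
    ultimately show ?thesis using h by linarith
  qed
  finally show "real (sample_size c T) \<le> 25 * real T ^ 3" by simp
  have "0 < 24 * real T * real T powr c * ln (real T)" using lnpos T by simp
  with ge show "sample_size c T > 0" by linarith
qed



lemma bad_j:
  assumes N: "N \<ge> 1" and T: "T \<ge> 3" and c: "0 < c" "c \<le> 1"
  shows "measure_pmf.prob (index_sample N (sample_size c T))
     {idx. \<not> (\<bar>estimate X N (sample_size c T) idx j - real (true_count X N j)\<bar>
            \<le> real N / real T + real (true_count X N j) / real T powr c)}
     \<le> real (true_count X N j) / real N * (51 / real T)"
proof -
  define U where "U = sample_size c T"
  define k where "k = real (true_count X N j)"
  define q where "q = k / real N"
  define d where "d = real T powr c"
  define m where "m = real U / real T"
  define Z where "Z = (\<lambda>idx. real (sample_count X U idx j))"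
  define P where "P = measure_pmf.prob (index_sample N U)"
  have T1: "real T \<ge> 3" using T by simp
  have d1: "d \<ge> 1" unfolding d_def using T1 c by (intro ge_one_powr_ge_zero) auto
  have Upos: "real U > 0" unfolding U_def using sample_facts[OF T c] by simp
  have Uge: "real U \<ge> 24 * real T * d * ln (real T)" unfolding U_def d_def using sample_facts[OF T c] by simp
  have Ule: "real U \<le> 25 * real T ^ 3" unfolding U_def using sample_facts[OF T c] by simp
  have q0: "q \<ge> 0" unfolding q_def k_def by simp
  have Nr: "real N > 0" using N by simp
  have kN: "k = q * real N" unfolding q_def using Nr by simp
  have lnT: "ln (real T) \<ge> ln 2" using T1 by simp
  have ln2: "ln (2::real) > 0" by simp
  have md: "m / d \<ge> 24 * ln (real T)"
  proof -
    have "m / d = real U / (real T * d)" by (simp add: m_def)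
    moreover have "24 * ln (real T) * (real T * d) \<le> real U" using Uge by (simp add: mult_ac)
    ultimately show ?thesis using T1 d1 by (simp add: le_divide_eq)
  qed
  have Z0: "\<And>idx. Z idx \<ge> 0" unfolding Z_def by simp
  have sub: "{idx. \<not> (\<bar>estimate X N U idx j - k\<bar> \<le> real N / real T + k / d)}
      \<subseteq> {idx. Z idx \<ge> real U * q * (1 + 1/d) + m} \<union> {idx. Z idx \<le> real U * q * (1 - 1/d) - m}"
  proof (rule subsetI, rule ccontr)
    fix idx
    assume bad: "idx \<in> {idx. \<not> (\<bar>estimate X N U idx j - k\<bar> \<le> real N / real T + k / d)}"
      and nd: "idx \<notin> {idx. Z idx \<ge> real U * q * (1 + 1/d) + m} \<union> {idx. Z idx \<le> real U * q * (1 - 1/d) - m}"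
    have e: "estimate X N U idx j - k = real N / real U * (Z idx - real U * q)"
      unfolding estimate_def Z_def kN using Upos by (simp add: field_simps)
    have "\<bar>Z idx - real U * q\<bar> \<le> real U * q / d + m"
      using nd by (auto simp: field_simps)
    hence "real N / real U * \<bar>Z idx - real U * q\<bar> \<le> real N / real U * (real U * q / d + m)"
      using Nr Upos by (intro mult_left_mono) auto
    also have "\<dots> = real N / real T + k / d"
      unfolding m_def kN using Upos by (simp add: field_simps)
    finally have "\<bar>estimate X N U idx j - k\<bar> \<le> real N / real T + k / d"
      unfolding e using Nr Upos by (simp add: abs_mult)
    thus False using bad by simp
  qed
  have up: "P {idx. Z idx \<ge> real U * q * (1 + 1/d) + m} \<le> 50 * q / real T"
  proof -
    define s where "s = 1 / (2 * d)"
    define a where "a = real U * q * (1 + 1/d) + m"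
    have s0: "0 < s" "s \<le> 1" unfolding s_def using d1 by auto
    have m0: "m \<ge> 0" unfolding m_def using Upos by simp
    have am: "a \<ge> m" unfolding a_def using q0 Upos d1 by simp
    have sm: "s * m \<ge> 12 * ln (real T)" unfolding s_def using md by (simp add: field_simps)
    have "s * a \<ge> s * m" using am s0 by (intro mult_left_mono) auto
    hence sa: "s * a \<ge> 12 * ln (real T)" using sm by linarith
    have "exp (s * a) \<ge> 2"
    proof -
      have "ln 2 \<le> s * a" using sa lnT ln2 by linarith
      hence "exp (ln 2) \<le> exp (s * a)" by (simp only: exp_le_cancel_iff)
      thus ?thesis by simp
    qed
    moreover have "a \<ge> real U * (real (true_count X N j) / real N) * (1 + s) + m"
    proof -
      have "s \<le> 1 / d" unfolding s_def using d1 by (simp add: field_simps)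
      hence "real U * q * (1 + s) \<le> real U * q * (1 + 1/d)"
        using Upos q0 by (intro mult_left_mono) auto
      thus ?thesis unfolding a_def q_def k_def by simp
    qed
    ultimately have "P {idx. Z idx \<ge> a} \<le> 4 * s * real U * q * exp (- s * m)"
      unfolding P_def Z_def q_def k_def using upper_tail[OF N s0] by blast
    also have "\<dots> \<le> 2 * real U * q * exp (- (12 * ln (real T)))"
    proof -
      have "4 * s \<le> 2" unfolding s_def using d1 by (simp add: field_simps)
      moreover have "exp (- s * m) \<le> exp (- (12 * ln (real T)))" using sm by simp
      ultimately show ?thesis using Upos q0
        by (intro mult_mono) (auto intro!: mult_nonneg_nonneg)
    qed
    also have "exp (- (12 * ln (real T))) = 1 / real T ^ 12"
      using exp_nat_ln[of "real T" 12] T1 by (simp add: exp_minus inverse_eq_divide)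
    also have "2 * real U * q * (1 / real T ^ 12) \<le> 2 * (25 * real T ^ 3) * q * (1 / real T ^ 12)"
      using Ule q0 by (intro mult_right_mono) auto
    also have "\<dots> = 50 * q / real T ^ 9"
      using T1 by (simp add: field_simps power_add[symmetric] eval_nat_numeral)
    also have "\<dots> \<le> 50 * q / real T"
    proof -
      have "real T ^ 1 \<le> real T ^ 9" using T1 by (intro power_increasing) auto
      thus ?thesis using q0 T1 by (intro divide_left_mono) auto
    qed
    finally show ?thesis unfolding a_def .
  qed
  have lo: "P {idx. Z idx \<le> real U * q * (1 - 1/d) - m} \<le> q / real T"
  proof (cases "real U * q * (1 - 1/d) - m < 0")
    case True
    hence "{idx. Z idx \<le> real U * q * (1 - 1/d) - m} = {}" 
    proof (intro equalityI subsetI)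
      fix idx assume "idx \<in> {idx. Z idx \<le> real U * q * (1 - 1/d) - m}"
      hence "Z idx \<le> real U * q * (1 - 1/d) - m" by simp
      with True Z0[of idx] show "idx \<in> {}" by linarith
    qed simp
    thus ?thesis using q0 T1 by (simp add: P_def)
  next
    case False
    define s where "s = 1 / d"
    define b where "b = real U * q * (1 - 1/d) - m"
    have s0: "0 < s" "s \<le> 1" unfolding s_def using d1 by auto
    have "P {idx. Z idx \<le> b} \<le> exp (s * b - real U * q * (s - s^2))"
      unfolding P_def Z_def q_def k_def using lower_tail[OF N s0] by blast
    also have "s * b - real U * q * (s - s^2) = - (m / d)"
      unfolding s_def b_def using d1 by (simp add: field_simps power2_eq_square)
    also have "exp (- (m / d)) \<le> exp (- (24 * ln (real T)))" using md by simp
    also have "exp (- (24 * ln (real T))) = 1 / real T ^ 24"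
      using exp_nat_ln[of "real T" 24] T1 by (simp add: exp_minus inverse_eq_divide)
    also have "\<dots> \<le> q / real T"
    proof -
      have "real U * q \<ge> m" using False d1 q0 Upos
        by (smt (verit, ccfv_threshold) mult_left_le mult_nonneg_nonneg divide_nonneg_nonneg)
      hence "real U * q \<ge> real U * (1 / real T)" unfolding m_def by simp
      hence q1: "q \<ge> 1 / real T" by (rule mult_left_le_imp_le) (use Upos in simp)
      have "1 / real T ^ 24 \<le> 1 / real T ^ 2"
        using T1 by (intro divide_left_mono power_increasing) auto
      also have "\<dots> = (1 / real T) / real T" by (simp add: power2_eq_square)
      also have "\<dots> \<le> q / real T" using q1 T1 by (intro divide_right_mono) auto
      finally show ?thesis .
    qed
    finally show ?thesis unfolding b_def .
  qed
  have "P {idx. \<not> (\<bar>estimate X N U idx j - k\<bar> \<le> real N / real T + k / d)}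
     \<le> P ({idx. Z idx \<ge> real U * q * (1 + 1/d) + m} \<union> {idx. Z idx \<le> real U * q * (1 - 1/d) - m})"
    unfolding P_def by (rule measure_pmf.finite_measure_mono[OF sub]) simp
  also have "\<dots> \<le> P {idx. Z idx \<ge> real U * q * (1 + 1/d) + m} + P {idx. Z idx \<le> real U * q * (1 - 1/d) - m}"
    unfolding P_def by (rule measure_Un_le) auto
  also have "\<dots> \<le> 50 * q / real T + q / real T" using up lo by linarith
  also have "\<dots> = q * (51 / real T)" by (simp add: field_simps)
  finally show ?thesis unfolding P_def U_def k_def d_def q_def .
qed



lemma sum_true_count: "(\<Sum>j\<in>{1..M}. real (true_count X N j)) \<le> real N"
proof -
  have "card (\<Union>j\<in>{1..M}. {i \<in> {1..N}. X i = j}) = (\<Sum>j\<in>{1..M}. card {i \<in> {1..N}. X i = j})"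
    by (rule card_UN_disjoint) auto
  moreover have "card (\<Union>j\<in>{1..M}. {i \<in> {1..N}. X i = j}) \<le> card {1..N}"
    by (rule card_mono) auto
  ultimately have "(\<Sum>j\<in>{1..M}. true_count X N j) \<le> N" unfolding true_count_def by simp
  hence "real (\<Sum>j\<in>{1..M}. true_count X N j) \<le> real N" by linarith
  thus ?thesis by simp
qed

theorem lemma11:
  fixes c :: real
  assumes "0 < c" and "c \<le> 1"
  shows "\<exists>C::real. \<exists>T0::nat. \<forall>(N::nat) (M::nat) (X::nat \<Rightarrow> nat) (T::nat).
     N \<ge> 1 \<longrightarrow> (\<forall>i\<in>{1..N}. X i \<in> {1..M}) \<longrightarrow> T \<ge> T0 \<longrightarrow> T > 0 \<longrightarrow>
     measure_pmf.prob (index_sample N (sample_size c T))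
       {idx. \<forall>j\<in>{1..M}.
          \<bar>estimate X N (sample_size c T) idx j - real (true_count X N j)\<bar>
            \<le> real N / real T + real (true_count X N j) / real T powr c}
     \<ge> 1 - C / real T"
proof (rule exI[where x="51::real"], rule exI[where x="3::nat"], intro allI impI)
  fix N M :: nat and X :: "nat \<Rightarrow> nat" and T :: nat
  assume N: "N \<ge> 1" and "\<forall>i\<in>{1..N}. X i \<in> {1..M}" and T: "T \<ge> 3" and "T > 0"
  define P where "P = measure_pmf.prob (index_sample N (sample_size c T))"
  define B where "B = (\<lambda>j. {idx. \<not> (\<bar>estimate X N (sample_size c T) idx j - real (true_count X N j)\<bar>
            \<le> real N / real T + real (true_count X N j) / real T powr c)})"
  define G where "G = {idx. \<forall>j\<in>{1..M}.
          \<bar>estimate X N (sample_size c T) idx j - real (true_count X N j)\<bar>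
            \<le> real N / real T + real (true_count X N j) / real T powr c}"
  have T1: "real T \<ge> 3" using T by simp
  have "P (UNIV - G) = P (\<Union>j\<in>{1..M}. B j)"
    unfolding G_def B_def by (intro arg_cong[where f = P]) auto
  also have "\<dots> \<le> (\<Sum>j\<in>{1..M}. P (B j))"
    unfolding P_def by (rule measure_pmf.finite_measure_subadditive_finite) auto
  also have "\<dots> \<le> (\<Sum>j\<in>{1..M}. real (true_count X N j) / real N * (51 / real T))"
    unfolding P_def B_def by (intro sum_mono bad_j[OF N T assms])
  also have "\<dots> = (\<Sum>j\<in>{1..M}. real (true_count X N j)) / real N * (51 / real T)"
    by (simp add: sum_distrib_right sum_divide_distrib)
  also have "\<dots> \<le> real N / real N * (51 / real T)"
    using sum_true_count[where M=M and X=X and N=N] N T1 by (intro mult_right_mono divide_right_mono) auto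
  also have "\<dots> = 51 / real T" using N by simp
  finally have bad: "P (UNIV - G) \<le> 51 / real T" .
  have "P (UNIV - (UNIV - G)) = 1 - P (UNIV - G)"
    unfolding P_def using measure_pmf.prob_compl[of "UNIV - G" "index_sample N (sample_size c T)"] by simp
  hence "P G = 1 - P (UNIV - G)" by (simp add: Diff_Diff_Int)
  with bad have "P G \<ge> 1 - 51 / real T" by linarith
  thus "measure_pmf.prob (index_sample N (sample_size c T))
       {idx. \<forall>j\<in>{1..M}.
          \<bar>estimate X N (sample_size c T) idx j - real (true_count X N j)\<bar>
            \<le> real N / real T + real (true_count X N j) / real T powr c}
     \<ge> 1 - 51 / real T" unfolding P_def G_def .
qed

end
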